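(* Assume (R) and let $n\ge1$ be odd. For all integers $k$ with $(n+1)/2\le k\le n$: $$\sum_{\nu=0}^{k}\binom{2k-n}{k-\nu}s_{n,\nu}=0,\qquad \sum_{\nu=0}^{k}\binom{2k-n}{k-\nu}\binom{n}{\nu}\alpha_{n-\nu,\nu}=0,\qquad \sum_{\nu=0}^{k}\binom{2k-\nu}{k}\binom{n}{\nu}\alpha_{n-\nu}=0.$$
   Context: Let $(\alpha_n)_{n\ge0}$ be an arbitrary sequence of complex numbers with Appell polynomials $A_n(x)=\sum_{\nu=0}^{n}\binom{n}{\nu}\alpha_{n-\nu}x^\nu$; property (R) means $A_n(1-x)=(-1)^nA_n(x)$ for all $n\ge0$. Let $s_{n,k}=\sum_{\nu=k}^{n}\binom{n}{\nu}\binom{\nu}{k}\alpha_\nu$ for $0\le k\le n$ (and $s_{n,\nu}=0$ for $\nu>n$), and $\alpha_{r,s}=\sum_{\nu=0}^{r}\binom{r}{\nu}\alpha_{s+\nu}$ for $r,s\ge0$. Binomial coefficients $\binom{m}{j}$ with integer $m$ are the usual generalized ones, zero for $j<0$. *)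

theory Defs
  imports Complex_Main
begin

definition appell :: "(nat \<Rightarrow> complex) \<Rightarrow> nat \<Rightarrow> complex \<Rightarrow> complex" where
  "appell \<alpha> n x = (\<Sum>\<nu>=0..n. of_nat (n choose \<nu>) * \<alpha> (n - \<nu>) * x ^ \<nu>)"

definition propR :: "(nat \<Rightarrow> complex) \<Rightarrow> bool" where
  "propR \<alpha> \<longleftrightarrow> (\<forall>n x. appell \<alpha> n (1 - x) = (-1) ^ n * appell \<alpha> n x)"

definition s_nk :: "(nat \<Rightarrow> complex) \<Rightarrow> nat \<Rightarrow> nat \<Rightarrow> complex" where
  "s_nk \<alpha> n k = (\<Sum>\<nu>=k..n. of_nat (n choose \<nu>) * of_nat (\<nu> choose k) * \<alpha> \<nu>)"

definition alpha_rs :: "(nat \<Rightarrow> complex) \<Rightarrow> nat \<Rightarrow> nat \<Rightarrow> complex" where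
  "alpha_rs \<alpha> r s = (\<Sum>\<nu>=0..r. of_nat (r choose \<nu>) * \<alpha> (s + \<nu>))"

definition ibinom :: "int \<Rightarrow> int \<Rightarrow> complex" where
  "ibinom m j = (if j < 0 then 0 else (of_int m :: complex) gchoose (nat j))"

end

theory Submission imports Defs "HOL-Computational_Algebra.Polynomial" begin

lemma coeff_11_pow: "coeff ([:1,1:]^m) i = (of_nat (m choose i) :: 'a::comm_semiring_1)"
proof (cases "i \<le> m")
  case True thus ?thesis by (simp add: coeff_linear_poly_power)
next
  case False
  have "degree ([:1::'a,1:]^m) \<le> m"
    using degree_power_le[of "[:1::'a,1:]" m] by simp
  then show ?thesis using False by (simp add: coeff_eq_0 binomial_eq_0)
qed

lemma key:
  fixes c :: "nat \<Rightarrow> complex"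
  assumes H: "\<And>y. y \<noteq> -1 \<Longrightarrow> (\<Sum>\<mu>\<le>n. c \<mu> * (1+y)^(d+\<mu>)) + (\<Sum>\<mu>\<le>n. c \<mu> * (y^(n-\<mu>) * (1+y)^(d+\<mu>))) = 0"
    and dn: "d + n = 2*k" and kn: "k \<le> n"
  shows "(\<Sum>\<mu>\<le>n. c \<mu> * of_nat ((d+\<mu>) choose k)) = 0"
proof -
  define P where "P = (\<Sum>\<mu>\<le>n. smult (c \<mu>) ([:1,1:]^(d+\<mu>) + monom 1 (n-\<mu>) * [:1,1:]^(d+\<mu>)))"
  have ev: "poly P y = (\<Sum>\<mu>\<le>n. c \<mu> * (1+y)^(d+\<mu>)) + (\<Sum>\<mu>\<le>n. c \<mu> * (y^(n-\<mu>) * (1+y)^(d+\<mu>)))" for y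
    by (simp add: P_def poly_sum poly_monom algebra_simps sum.distrib)
  have cm: "coeff (monom (1::complex) j * [:1,1:]^m) i = (if i < j then 0 else of_nat (m choose (i-j)))" for j m i
    by (simp add: coeff_monom_mult coeff_11_pow)
  have c1: "coeff ([:1::complex,1:]^m) i = of_nat (m choose i)" for m i by (rule coeff_11_pow)
  have "P = 0"
  proof (rule ccontr)
    assume "P \<noteq> 0"
    hence "finite {y. poly P y = 0}" by (rule poly_roots_finite)
    moreover have "UNIV - {-1} \<subseteq> {y. poly P y = 0}" using H ev by auto
    ultimately have "finite (UNIV - {-1::complex})" by (rule finite_subset[rotated])
    thus False using infinite_UNIV_char_0[where 'a=complex] by simp
  qed
  hence "coeff P k = 0" by simp
  moreover have "coeff P k = (\<Sum>\<mu>\<le>n. c \<mu> * (of_nat ((d+\<mu>) choose k) + (if k < n-\<mu> then 0 else of_nat ((d+\<mu>) choose (k-(n-\<mu>))))))"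
    unfolding P_def coeff_sum coeff_smult coeff_add cm c1 ..
  moreover have pw: "(if k < n-\<mu> then 0 else of_nat ((d+\<mu>) choose (k-(n-\<mu>))) :: complex) = of_nat ((d+\<mu>) choose k)" if "\<mu> \<le> n" for \<mu>
  proof (cases "k < n - \<mu>")
    case True
    hence "d + \<mu> < k" using dn that by linarith
    thus ?thesis using True by simp
  next
    case False
    hence "k - (n-\<mu>) \<le> d+\<mu>" "d + \<mu> - (k - (n-\<mu>)) = k" using dn that kn by linarith+
    thus ?thesis using False by (metis binomial_symmetric)
  qed
  ultimately have "(\<Sum>\<mu>\<le>n. c \<mu> * (2 * of_nat ((d+\<mu>) choose k))) = 0"
    by (smt (verit) sum.cong atMost_iff mult_2)
  hence "2 * (\<Sum>\<mu>\<le>n. c \<mu> * of_nat ((d+\<mu>) choose k)) = 0"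
    by (simp add: sum_distrib_left algebra_simps)
  thus ?thesis by simp
qed

lemma rev_sum: "(\<Sum>\<nu>=0..(n::nat). f \<nu>) = (\<Sum>\<mu>\<le>n. f (n - \<mu>))"
  by (rule sum.reindex_bij_witness[where i="\<lambda>i. n - i" and j="\<lambda>i. n - i"]) auto

lemma appell_rev: "appell \<alpha> n x = (\<Sum>\<mu>\<le>n. of_nat (n choose \<mu>) * \<alpha> \<mu> * x ^ (n - \<mu>))"
  unfolding appell_def rev_sum
  by (intro sum.cong refl) (auto simp: binomial_symmetric[symmetric])

lemma scale1: "z \<noteq> 0 \<Longrightarrow> \<mu> \<le> n \<Longrightarrow> (w / z) ^ (n - \<mu>) * z ^ (d + n) = w ^ (n - \<mu>) * (z::complex) ^ (d + \<mu>)"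
proof -
  assume z: "z \<noteq> 0" and m: "\<mu> \<le> n"
  have "z ^ (d + n) = z ^ (d + \<mu>) * z ^ (n - \<mu>)" using m by (simp add: power_add[symmetric])
  thus ?thesis using z by (simp add: power_divide field_simps)
qed

lemma ibinom_nat: "ibinom (int m) (int j) = of_nat (m choose j)"
  unfolding ibinom_def by (simp add: binomial_gbinomial)

theorem mainTheorem18:
  fixes \<alpha> :: "nat \<Rightarrow> complex" and n k :: nat
  assumes "propR \<alpha>" and "n \<ge> 1" and "odd n"
    and "(n + 1) div 2 \<le> k" and "k \<le> n"
  shows "(\<Sum>\<nu>=0..k. ibinom (2 * int k - int n) (int k - int \<nu>) * s_nk \<alpha> n \<nu>) = 0
    \<and> (\<Sum>\<nu>=0..k. ibinom (2 * int k - int n) (int k - int \<nu>) * of_nat (n choose \<nu>)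
            * alpha_rs \<alpha> (n - \<nu>) \<nu>) = 0
    \<and> (\<Sum>\<nu>=0..k. ibinom (2 * int k - int \<nu>) (int k) * of_nat (n choose \<nu>) * \<alpha> (n - \<nu>)) = 0"
proof -
  define d where "d = 2 * k - n"
  have dn: "d + n = 2 * k" using assms(3,4) unfolding d_def by (auto elim!: oddE)
  define c where "c \<mu> = of_nat (n choose \<mu>) * \<alpha> \<mu>" for \<mu>
  have H: "(\<Sum>\<mu>\<le>n. c \<mu> * (1+y)^(d+\<mu>)) + (\<Sum>\<mu>\<le>n. c \<mu> * (y^(n-\<mu>) * (1+y)^(d+\<mu>))) = 0"
    if y: "y \<noteq> -1" for y
  proof -
    define z where "z = 1 + y"
    have z: "z \<noteq> 0" using y unfolding z_def by (metis add.commute add_eq_0_iff2)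
    have R: "appell \<alpha> n (1 - 1/z) = - appell \<alpha> n (1/z)"
      using assms(1,3) unfolding propR_def by simp
    have e1: "1 - 1/z = y / z" using z unfolding z_def by (simp add: field_simps)
    have A: "z^(d+n) * appell \<alpha> n (1/z) = (\<Sum>\<mu>\<le>n. c \<mu> * z^(d+\<mu>))"
      unfolding appell_rev sum_distrib_left
    proof (intro sum.cong refl)
      fix \<mu> assume "\<mu> \<in> {..n}"
      hence "((1/z)^(n-\<mu>) * z^(d+n)) = 1^(n-\<mu>) * z^(d+\<mu>)" using scale1[OF z, of \<mu> n 1 d] by simp
      moreover have "z^(d+n) * (of_nat (n choose \<mu>) * \<alpha> \<mu> * (1/z)^(n-\<mu>)) = c \<mu> * ((1/z)^(n-\<mu>) * z^(d+n))"
        unfolding c_def by (simp only: mult_ac)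
      ultimately show "z^(d+n) * (of_nat (n choose \<mu>) * \<alpha> \<mu> * (1/z)^(n-\<mu>)) = c \<mu> * z^(d+\<mu>)"
        by simp
    qed
    have B: "z^(d+n) * appell \<alpha> n (y/z) = (\<Sum>\<mu>\<le>n. c \<mu> * (y^(n-\<mu>) * z^(d+\<mu>)))"
      unfolding appell_rev sum_distrib_left
    proof (intro sum.cong refl)
      fix \<mu> assume "\<mu> \<in> {..n}"
      hence "((y/z)^(n-\<mu>) * z^(d+n)) = y^(n-\<mu>) * z^(d+\<mu>)" using scale1[OF z, of \<mu> n y d] by simp
      moreover have "z^(d+n) * (of_nat (n choose \<mu>) * \<alpha> \<mu> * (y/z)^(n-\<mu>)) = c \<mu> * ((y/z)^(n-\<mu>) * z^(d+n))"
        unfolding c_def by (simp only: mult_ac)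
      ultimately show "z^(d+n) * (of_nat (n choose \<mu>) * \<alpha> \<mu> * (y/z)^(n-\<mu>)) = c \<mu> * (y^(n-\<mu>) * z^(d+\<mu>))"
        by simp
    qed
    have "z^(d+n) * appell \<alpha> n (1/z) + z^(d+n) * appell \<alpha> n (y/z) = 0"
      using R e1 by (simp add: algebra_simps)
    thus ?thesis using A B unfolding z_def by simp
  qed
  have K: "(\<Sum>\<mu>\<le>n. c \<mu> * of_nat ((d+\<mu>) choose k)) = 0"
    by (rule key[OF H dn assms(5)])
  have T: "(\<Sum>\<nu>=0..k. ibinom (2 * int k - int \<nu>) (int k) * of_nat (n choose \<nu>) * \<alpha> (n - \<nu>))
      = (\<Sum>\<mu>\<le>n. c \<mu> * of_nat ((d+\<mu>) choose k))"
  proof -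
    have "(\<Sum>\<nu>=0..k. ibinom (2 * int k - int \<nu>) (int k) * of_nat (n choose \<nu>) * \<alpha> (n - \<nu>))
        = (\<Sum>\<nu>=0..k. of_nat ((2*k - \<nu>) choose k) * of_nat (n choose \<nu>) * \<alpha> (n - \<nu>))"
    proof (intro sum.cong refl)
      fix \<nu> assume "\<nu> \<in> {0..k}"
      hence eq: "2 * int k - int \<nu> = int (2*k - \<nu>)" by auto
      show "ibinom (2 * int k - int \<nu>) (int k) * of_nat (n choose \<nu>) * \<alpha> (n - \<nu>) =
         of_nat ((2*k - \<nu>) choose k) * of_nat (n choose \<nu>) * \<alpha> (n - \<nu>)"
        unfolding eq ibinom_nat by (rule refl)
    qed
    also have "\<dots> = (\<Sum>\<nu>=0..n. of_nat ((2*k - \<nu>) choose k) * of_nat (n choose \<nu>) * \<alpha> (n - \<nu>))"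
    proof -
      have "{0..n} = {0..k} \<union> {k<..n}" using assms(5) by auto
      moreover have "(\<Sum>\<nu>\<in>{k<..n}. of_nat ((2*k - \<nu>) choose k) * of_nat (n choose \<nu>) * \<alpha> (n - \<nu>)) = (0::complex)"
        using dn assms(2) by (intro sum.neutral) (auto simp: binomial_eq_0)
      moreover have "{0..k} \<inter> {k<..n} = {}" by auto
      ultimately show ?thesis by (simp only: sum.union_disjoint[OF finite_atLeastAtMost finite_greaterThanAtMost] add_0_right)
    qed
    also have "\<dots> = (\<Sum>\<mu>\<le>n. c \<mu> * of_nat ((d+\<mu>) choose k))"
      unfolding rev_sum
    proof (intro sum.cong refl)
      fix \<mu> assume "\<mu> \<in> {..n}"
      hence "2*k - (n - \<mu>) = d + \<mu>" "n - (n - \<mu>) = \<mu>" "n choose (n - \<mu>) = n choose \<mu>"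
        using dn binomial_symmetric[of \<mu> n] by auto
      thus "of_nat ((2*k - (n-\<mu>)) choose k) * of_nat (n choose (n-\<mu>)) * \<alpha> (n - (n-\<mu>)) = c \<mu> * of_nat ((d+\<mu>) choose k)"
        by (simp add: c_def)
    qed
    finally show ?thesis .
  qed
  have S: "(\<Sum>\<nu>=0..k. ibinom (2 * int k - int n) (int k - int \<nu>) * s_nk \<alpha> n \<nu>)
      = (\<Sum>\<mu>\<le>n. c \<mu> * of_nat ((d+\<mu>) choose k))"
  proof -
    have s: "s_nk \<alpha> n \<nu> = (\<Sum>\<mu>\<le>n. c \<mu> * of_nat (\<mu> choose \<nu>))" for \<nu>
    proof (cases "\<nu> \<le> n")
      case True
      have u: "{..n} = {0..<\<nu>} \<union> {\<nu>..n}" "{0..<\<nu>} \<inter> {\<nu>..n} = {}" using True by auto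
      have z: "(\<Sum>\<mu>\<in>{0..<\<nu>}. c \<mu> * of_nat (\<mu> choose \<nu>)) = 0"
        by (intro sum.neutral) (auto simp: binomial_eq_0)
      have "(\<Sum>\<mu>\<le>n. c \<mu> * of_nat (\<mu> choose \<nu>)) = (\<Sum>\<mu>\<in>{\<nu>..n}. c \<mu> * of_nat (\<mu> choose \<nu>))"
        unfolding u(1) by (subst sum.union_disjoint) (use u(2) z in auto)
      also have "\<dots> = s_nk \<alpha> n \<nu>" unfolding s_nk_def c_def by (simp add: mult_ac)
      finally show ?thesis by simp
    next
      case False
      show ?thesis
      proof -
        have "{\<nu>..n} = {}" using False by auto
        moreover have "(\<Sum>\<mu>\<le>n. c \<mu> * of_nat (\<mu> choose \<nu>)) = 0"
          using False by (intro sum.neutral) (auto simp: binomial_eq_0)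
        ultimately show ?thesis by (simp add: s_nk_def)
      qed
    qed
    have "(\<Sum>\<nu>=0..k. ibinom (2 * int k - int n) (int k - int \<nu>) * s_nk \<alpha> n \<nu>)
        = (\<Sum>\<nu>\<le>k. of_nat (d choose (k - \<nu>)) * (\<Sum>\<mu>\<le>n. c \<mu> * of_nat (\<mu> choose \<nu>)))"
      unfolding atLeast0AtMost
    proof (intro sum.cong refl)
      fix \<nu> assume "\<nu> \<in> {..k}"
      hence eq: "2 * int k - int n = int d" "int k - int \<nu> = int (k - \<nu>)" using dn by auto
      show "ibinom (2 * int k - int n) (int k - int \<nu>) * s_nk \<alpha> n \<nu> = of_nat (d choose (k - \<nu>)) * (\<Sum>\<mu>\<le>n. c \<mu> * of_nat (\<mu> choose \<nu>))"
        unfolding eq ibinom_nat s by (rule refl)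
    qed
    also have "\<dots> = (\<Sum>\<mu>\<le>n. c \<mu> * of_nat (\<Sum>\<nu>\<le>k. (\<mu> choose \<nu>) * (d choose (k - \<nu>))))"
    proof -
      have "(\<Sum>\<nu>\<le>k. of_nat (d choose (k - \<nu>)) * (\<Sum>\<mu>\<le>n. c \<mu> * of_nat (\<mu> choose \<nu>)))
          = (\<Sum>\<nu>\<le>k. \<Sum>\<mu>\<le>n. c \<mu> * (of_nat (\<mu> choose \<nu>) * of_nat (d choose (k - \<nu>))))"
        by (simp add: sum_distrib_left mult_ac)
      also have "\<dots> = (\<Sum>\<mu>\<le>n. \<Sum>\<nu>\<le>k. c \<mu> * (of_nat (\<mu> choose \<nu>) * of_nat (d choose (k - \<nu>))))"
        by (rule sum.swap)
      also have "\<dots> = (\<Sum>\<mu>\<le>n. c \<mu> * of_nat (\<Sum>\<nu>\<le>k. (\<mu> choose \<nu>) * (d choose (k - \<nu>))))"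
        by (simp add: sum_distrib_left)
      finally show ?thesis .
    qed
    also have "\<dots> = (\<Sum>\<mu>\<le>n. c \<mu> * of_nat ((d+\<mu>) choose k))"
      by (simp add: vandermonde add.commute)
    finally show ?thesis .
  qed
  have M: "(\<Sum>\<nu>=0..k. ibinom (2 * int k - int n) (int k - int \<nu>) * of_nat (n choose \<nu>)
            * alpha_rs \<alpha> (n - \<nu>) \<nu>) = (\<Sum>\<nu>=0..k. ibinom (2 * int k - int n) (int k - int \<nu>) * s_nk \<alpha> n \<nu>)"
  proof (intro sum.cong refl)
    fix \<nu> assume "\<nu> \<in> {0..k}"
    hence nu: "\<nu> \<le> n" using assms(5) by auto
    have "of_nat (n choose \<nu>) * alpha_rs \<alpha> (n - \<nu>) \<nu> = s_nk \<alpha> n \<nu>"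
    proof -
      have "of_nat (n choose \<nu>) * alpha_rs \<alpha> (n - \<nu>) \<nu>
          = (\<Sum>j=0..n-\<nu>. of_nat (n choose (j+\<nu>)) * of_nat ((j+\<nu>) choose \<nu>) * \<alpha> (j+\<nu>))"
        unfolding alpha_rs_def sum_distrib_left
      proof (intro sum.cong refl)
        fix j assume "j \<in> {0..n-\<nu>}"
        hence "(n choose (j+\<nu>)) * ((j+\<nu>) choose \<nu>) = (n choose \<nu>) * ((n - \<nu>) choose j)"
          using choose_mult[of \<nu> "j+\<nu>" n] nu by auto
        hence "(of_nat (n choose (j+\<nu>)) * of_nat ((j+\<nu>) choose \<nu>) :: complex) = of_nat (n choose \<nu>) * of_nat ((n - \<nu>) choose j)"
          by (metis of_nat_mult)
        thus "of_nat (n choose \<nu>) * (of_nat (n - \<nu> choose j) * \<alpha> (\<nu> + j)) =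
          of_nat (n choose (j + \<nu>)) * of_nat (j + \<nu> choose \<nu>) * \<alpha> (j + \<nu>)"
          by (simp add: add.commute mult_ac)
      qed
      also have "\<dots> = s_nk \<alpha> n \<nu>"
        unfolding s_nk_def using nu
        by (subst sum.shift_bounds_cl_nat_ivl[symmetric]) simp
      finally show ?thesis .
    qed
    thus "ibinom (2 * int k - int n) (int k - int \<nu>) * of_nat (n choose \<nu>) * alpha_rs \<alpha> (n - \<nu>) \<nu> =
         ibinom (2 * int k - int n) (int k - int \<nu>) * s_nk \<alpha> n \<nu>"
      by (simp add: mult.assoc)
  qed
  show ?thesis using K S T M by simp
qed

end
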